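(* If $w\ne w'$, with $w,w'\in(0,1)$, the measures $\mu_w$ and $\mu_{w'}$ on $X$ are mutually singular.
   Context: Let $\{X_n\}_{n\ge0}$ be the sequence of metric graphs where $X_0$ is a single edge identified with $[0,1]$, and $X_{n+1}$ is obtained from $X_n$ by subdividing each edge of $X_n$ into four equal parts and replacing it by a rescaled copy of the diamond graph. This diamond graph consists of six edges of equal length: edge 1 (initial segment), then two parallel paths of two edges each, namely edges 2,3 (upper path) and edges 4,5 (lower path), then edge 6 (final segment). Each edge of $X_n$ has length $4^{-n}$; collapsing the diamond to a segment gives $1$-Lipschitz maps $\pi_{n+1,n}:X_{n+1}\to X_n$, which compose to maps $\pi_{n,k}:X_n\to X_k$ with $\pi_{k,m}\circ\pi_{n,k}=\pi_{n,m}$. With $X_n$ given the length distance, $X$ is the Gromov–Hausdorff limit of $\{X_n\}$, with $1$-Lipschitz maps $\pi_{\infty,n}:X\to X_n$ satisfying $\pi_{n,k}\circ\pi_{\infty,n}=\pi_{\infty,k}$. For $w\in(0,1)$, $\mu_w$ is the unique probability measure on $X$ such that: (R1) for each $n\ge0$, the pushforward of $\mu_w$ under $\pi_{\infty,n}$ is a probability measure $\mu_{w,n}$ on $X_n$; (R2) $\mu_{w,n}$ is a multiple of arclength on each edge of $X_n$, and $\mu_{w,0}$ is Lebesgue measure on $[0,1]$; (R3) for each edge $e_n$ of $X_n$, letting $e_{n+1,i}$ ($i=1,\dots,6$, labelled as in the diamond graph) be the edges of $X_{n+1}$ whose union is $\pi_{n+1,n}^{-1}(e_n)$, one has $\mu_{w,n+1}$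 restricted to $e_{n+1,i}$ equal to $\mu_{w,n}(e_n)\,\mathcal{H}^1$ restricted to $e_{n+1,i}$ for $i=1,6$, to $w\,\mu_{w,n}(e_n)\,\mathcal{H}^1$ restricted to $e_{n+1,i}$ for $i=2,3$, and to $(1-w)\,\mu_{w,n}(e_n)\,\mathcal{H}^1$ restricted to $e_{n+1,i}$ for $i=4,5$, where $\mathcal{H}^1$ is $1$-dimensional Hausdorff measure. *)

theory Defs
  imports "HOL-Probability.Probability"
begin

text \<open>
Concrete model of the diamond fractal X (inverse limit of the metric graphs X_n).
A point of X is a pair (s, b): s in [0,1] is its image under the collapse map
onto X_0 = [0,1], and b k records, for the level-(k+1) diamond containing the point,
whether the point lies on the upper path (True) or the lower path (False).  The bit
b k is only meaningful if the point lies strictly inside the parallel part of its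
level-(k+1) diamond; otherwise it is normalised to False.
\<close>

text \<open>Local coordinate (in [0,1]) of position s inside its level-k edge.\<close>
fun loc :: "real \<Rightarrow> nat \<Rightarrow> real" where
  "loc s 0 = s"
| "loc s (Suc k) = 4 * loc s k - of_int \<lfloor>4 * loc s k\<rfloor>"

definition mid :: "real \<Rightarrow> bool" where
  "mid x \<longleftrightarrow> 1/4 < x \<and> x < 3/4"

definition diamond_X :: "(real \<times> (nat \<Rightarrow> bool)) set" where
  "diamond_X = {(s, b). 0 \<le> s \<and> s \<le> 1 \<and> (\<forall>k. b k \<longrightarrow> mid (loc s k))}"

text \<open>Edges of the diamond graph are labelled 0..5 (paper: 1..6).
 Edge 0 = initial segment, 1,2 = upper path, 3,4 = lower path, 5 = final segment.
 quarter i = which quarter of the parent edge the sub-edge i projects onto.\<close>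
definition quarter :: "nat \<Rightarrow> real" where
  "quarter i = (if i = 0 then 0 else if i = 1 \<or> i = 3 then 1
                else if i = 2 \<or> i = 4 then 2 else 3)"

definition upper :: "nat \<Rightarrow> bool" where
  "upper i \<longleftrightarrow> i = 1 \<or> i = 2"

text \<open>Edges of X_n are words of length n over {0..5}; the k-th letter is the choice of
 sub-edge made when passing from X_k to X_(k+1).\<close>
definition edge_word :: "nat \<Rightarrow> nat list \<Rightarrow> bool" where
  "edge_word n e \<longleftrightarrow> length e = n \<and> set e \<subseteq> {..<6}"

definition edge_start :: "nat list \<Rightarrow> real" where
  "edge_start e = (\<Sum>k<length e. quarter (e ! k) / 4 ^ (Suc k))"

text \<open>The set of points x of X such that pi_(infinity,n)(x) lies on the edge e of X_n
 with (normalised to [0,1]) arclength parameter in B.\<close>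
definition edge_cyl :: "nat \<Rightarrow> nat list \<Rightarrow> real set \<Rightarrow> (real \<times> (nat \<Rightarrow> bool)) set" where
  "edge_cyl n e B = {(s, b) \<in> diamond_X.
      (let t = 4 ^ n * (s - edge_start e) in 0 \<le> t \<and> t \<le> 1 \<and> t \<in> B) \<and>
      (\<forall>k<n. mid (loc s k) \<longrightarrow> (b k \<longleftrightarrow> upper (e ! k)))}"

definition diamond_space :: "(real \<times> (nat \<Rightarrow> bool)) measure" where
  "diamond_space = sigma diamond_X
     {edge_cyl n e B | n e B. edge_word n e \<and> B \<in> sets borel}"

definition wfac :: "real \<Rightarrow> nat \<Rightarrow> real" where
  "wfac w i = (if i = 1 \<or> i = 2 then w else if i = 3 \<or> i = 4 then 1 - w else 1)"

definition edge_density :: "real \<Rightarrow> nat list \<Rightarrow> real" where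
  "edge_density w e = (\<Prod>k<length e. wfac w (e ! k))"

text \<open>mu satisfies (R1)-(R3) for parameter w: mu is a probability measure on X whose
 pushforward to X_n is, on each edge e of X_n, edge_density w e times H^1
 (the edge e has length 4^-n).\<close>
definition is_mu :: "real \<Rightarrow> (real \<times> (nat \<Rightarrow> bool)) measure \<Rightarrow> bool" where
  "is_mu w \<mu> \<longleftrightarrow> prob_space \<mu> \<and> sets \<mu> = sets diamond_space \<and>
     (\<forall>n e B. edge_word n e \<and> B \<in> sets borel \<longrightarrow>
        measure \<mu> (edge_cyl n e B)
          = edge_density w e / 4 ^ n * measure lborel (B \<inter> {0..1}))"

definition mutually_singular :: "'a measure \<Rightarrow> 'a measure \<Rightarrow> bool" where
  "mutually_singular M N \<longleftrightarrow>
     (\<exists>A \<in> sets M. A \<in> sets N \<and> emeasure M A = 0 \<and> emeasure N (space N - A) = 0)"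

end

theory Submission
  imports Defs
begin
definition words :: "nat \<Rightarrow> nat list set" where "words n = {e. edge_word n e}"
definition cnt :: "nat list \<Rightarrow> nat" where "cnt e = length (filter upper e)"
definition Pw :: "real \<Rightarrow> nat list \<Rightarrow> real" where "Pw w e = edge_density w e / 4 ^ length e"

lemma finite_words: "finite (words n)"
proof -
  have "words n = {xs. set xs \<subseteq> {..<6} \<and> length xs = n}"
    by (auto simp: words_def edge_word_def)
  then show ?thesis using finite_lists_length_eq[of "{..<6::nat}" n] by simp
qed

lemma words_Suc: "words (Suc n) = (\<lambda>(i,e). i # e) ` ({..<6} \<times> words n)"
  by (auto simp: words_def edge_word_def length_Suc_conv image_iff)

lemma sum_words_Suc:
  "(\<Sum>e\<in>words (Suc n). f e) = (\<Sum>i<6. \<Sum>e\<in>words n. f (i # e))"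
proof -
  have inj: "inj_on (\<lambda>(i,e). i # e) ({..<6::nat} \<times> words n)"
    by (auto simp: inj_on_def)
  have "(\<Sum>e\<in>words (Suc n). f e) = (\<Sum>x\<in>{..<6} \<times> words n. f (case x of (i,e) \<Rightarrow> i # e))"
    unfolding words_Suc by (subst sum.reindex[OF inj]) (simp add: comp_def)
  also have "\<dots> = (\<Sum>i<6. \<Sum>e\<in>words n. f (i # e))"
    by (simp add: sum.cartesian_product prod.case_distrib)
  finally show ?thesis .
qed

lemma words_0: "words 0 = {[]}"
  by (auto simp: words_def edge_word_def)

lemma edge_density_Cons: "edge_density w (i # e) = wfac w i * edge_density w e"
  unfolding edge_density_def by (simp add: prod.lessThan_Suc_shift del: prod.lessThan_Suc)

lemma Pw_Cons: "Pw w (i # e) = wfac w i / 4 * Pw w e"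
  by (simp add: Pw_def edge_density_Cons)

lemma Pw_nonneg: "0 \<le> w \<Longrightarrow> w \<le> 1 \<Longrightarrow> 0 \<le> Pw w e"
  unfolding Pw_def edge_density_def
  by (intro divide_nonneg_pos prod_nonneg) (auto simp: wfac_def)

lemma cnt_Cons: "cnt (i # e) = (if upper i then 1 else 0) + cnt e"
  by (simp add: cnt_def)

lemma sum6: fixes f :: "nat \<Rightarrow> real" shows "(\<Sum>i<6. f i) = f 0 + f 1 + f 2 + f 3 + f 4 + f 5"
  by (simp add: numeral_eq_Suc)

lemma wsum0: "(\<Sum>i<6. wfac w i / 4) = 1"
  by (simp add: sum6 wfac_def field_simps)

lemma wsum1: "(\<Sum>i<6. wfac w i / 4 * (if upper i then 1 else 0)) = w / 2"
  by (simp add: sum6 wfac_def upper_def)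

lemma M0: "(\<Sum>e\<in>words n. Pw w e) = 1"
proof (induction n)
  case 0 then show ?case by (simp add: words_0 Pw_def edge_density_def)
next
  case (Suc n)
  have "(\<Sum>e\<in>words (Suc n). Pw w e) = (\<Sum>i<6. wfac w i / 4 * (\<Sum>e\<in>words n. Pw w e))"
    by (simp add: sum_words_Suc Pw_Cons sum_distrib_left)
  then show ?case using Suc wsum0 by simp
qed

lemma lin: "(\<Sum>i\<in>I. c i * (u i * A + B)) = (\<Sum>i\<in>I. c i * u i) * A + (\<Sum>i\<in>I. c i) * (B::real)"
  by (simp add: sum.distrib sum_distrib_right distrib_left mult.assoc)

lemma M1: "(\<Sum>e\<in>words n. Pw w e * cnt e) = real n * (w/2)"
proof (induction n)
  case 0 then show ?case by (simp add: words_0 cnt_def)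
next
  case (Suc n)
  let ?u = "\<lambda>i. (if upper i then 1 else 0) :: real"
  have "(\<Sum>e\<in>words (Suc n). Pw w e * cnt e)
      = (\<Sum>i<6. wfac w i / 4 * (?u i * (\<Sum>e\<in>words n. Pw w e) + (\<Sum>e\<in>words n. Pw w e * cnt e)))"
    unfolding sum_words_Suc
  proof (rule sum.cong[OF refl])
    fix i :: nat
    have "(\<Sum>e\<in>words n. Pw w (i # e) * real (cnt (i # e))) = (\<Sum>e\<in>words n. wfac w i / 4 * (?u i * Pw w e + Pw w e * cnt e))"
      by (rule sum.cong[OF refl]) (cases "upper i", simp_all add: Pw_Cons cnt_Cons algebra_simps)
    also have "\<dots> = wfac w i / 4 * (?u i * (\<Sum>e\<in>words n. Pw w e) + (\<Sum>e\<in>words n. Pw w e * cnt e))"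
      by (simp only: sum.distrib sum_distrib_left[symmetric])
    finally show "(\<Sum>e\<in>words n. Pw w (i # e) * real (cnt (i # e))) = wfac w i / 4 * (?u i * (\<Sum>e\<in>words n. Pw w e) + (\<Sum>e\<in>words n. Pw w e * cnt e))" .
  qed
  also have "\<dots> = (\<Sum>i<6. wfac w i / 4 * ?u i) * 1 + (\<Sum>i<6. wfac w i / 4) * (real n * (w/2))"
    unfolding lin Suc M0 ..
  also have "\<dots> = real (Suc n) * (w/2)" unfolding wsum0 wsum1 by (simp add: algebra_simps)
  finally show ?case .
qed

lemma M2: "(\<Sum>e\<in>words n. Pw w e * (real (cnt e))^2) = real n * (w/2) + real n * (real n - 1) * (w/2)^2"
proof (induction n)
  case 0 then show ?case by (simp add: words_0 cnt_def)
next
  case (Suc n)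
  let ?u = "\<lambda>i. (if upper i then 1 else 0) :: real"
  have "(\<Sum>e\<in>words (Suc n). Pw w e * (real (cnt e))^2)
      = (\<Sum>i<6. wfac w i / 4 * (?u i * ((\<Sum>e\<in>words n. Pw w e) + 2 * (\<Sum>e\<in>words n. Pw w e * cnt e)) + (\<Sum>e\<in>words n. Pw w e * (real (cnt e))^2)))"
    unfolding sum_words_Suc
  proof (rule sum.cong[OF refl])
    fix i :: nat
    have "(\<Sum>e\<in>words n. Pw w (i # e) * (real (cnt (i # e)))^2) = (\<Sum>e\<in>words n. wfac w i / 4 * (?u i * (Pw w e + 2 * (Pw w e * cnt e)) + Pw w e * (real (cnt e))^2))"
      by (rule sum.cong[OF refl]) (cases "upper i", simp_all add: Pw_Cons cnt_Cons algebra_simps power2_eq_square)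
    also have "\<dots> = wfac w i / 4 * (?u i * ((\<Sum>e\<in>words n. Pw w e) + 2 * (\<Sum>e\<in>words n. Pw w e * cnt e)) + (\<Sum>e\<in>words n. Pw w e * (real (cnt e))^2))"
      by (simp only: sum.distrib sum_distrib_left[symmetric])
    finally show "(\<Sum>e\<in>words n. Pw w (i # e) * (real (cnt (i # e)))^2) = wfac w i / 4 * (?u i * ((\<Sum>e\<in>words n. Pw w e) + 2 * (\<Sum>e\<in>words n. Pw w e * cnt e)) + (\<Sum>e\<in>words n. Pw w e * (real (cnt e))^2))" .
  qed
  also have "\<dots> = (\<Sum>i<6. wfac w i / 4 * ?u i) * (1 + 2 * (real n * (w/2))) + (\<Sum>i<6. wfac w i / 4) * (real n * (w/2) + real n * (real n - 1) * (w/2)^2)"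
    unfolding lin Suc M0 M1 ..
  also have "\<dots> = real (Suc n) * (w/2) + real (Suc n) * (real (Suc n) - 1) * (w/2)^2"
    unfolding wsum0 wsum1 by (simp add: field_simps power2_eq_square)
  finally show ?case .
qed

lemma var_eq: "(\<Sum>e\<in>words n. Pw w e * (real (cnt e) - real n * (w/2))^2) = real n * (w/2) * (1 - w/2)"
proof -
  have "(\<Sum>e\<in>words n. Pw w e * (real (cnt e) - real n * (w/2))^2)
     = (\<Sum>e\<in>words n. Pw w e * (real (cnt e))^2) - 2 * (real n * (w/2)) * (\<Sum>e\<in>words n. Pw w e * cnt e) + (real n * (w/2))^2 * (\<Sum>e\<in>words n. Pw w e)"
    by (simp add: power2_diff sum.distrib sum_subtractf sum_distrib_left sum_distrib_right algebra_simps)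
  also have "\<dots> = real n * (w/2) * (1 - w/2)"
    unfolding M0 M1 M2 by (simp add: field_simps power2_eq_square)
  finally show ?thesis .
qed

lemma cheb:
  assumes "0 \<le> w" "w \<le> 1" "n > 0" "\<epsilon> > 0"
  shows "(\<Sum>e\<in>{e\<in>words n. \<not> \<bar>real (cnt e) - real n*(w/2)\<bar> \<le> real n*\<epsilon>}. Pw w e) \<le> 1 / (4 * real n * \<epsilon>^2)"
proof -
  let ?B = "{e\<in>words n. \<not> \<bar>real (cnt e) - real n*(w/2)\<bar> \<le> real n*\<epsilon>}"
  let ?d = "(real n * \<epsilon>)^2"
  have dpos: "?d > 0" using assms by simp
  have "(\<Sum>e\<in>?B. Pw w e) \<le> (\<Sum>e\<in>?B. Pw w e * (real (cnt e) - real n * (w/2))^2 / ?d)"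
  proof (rule sum_mono)
    fix e assume "e \<in> ?B"
    then have "real n * \<epsilon> < \<bar>real (cnt e) - real n*(w/2)\<bar>" by auto
    then have "?d \<le> (real (cnt e) - real n * (w/2))^2"
      using assms by (metis abs_le_square_iff abs_of_pos less_eq_real_def mult_pos_pos of_nat_0_less_iff)
    then have "1 \<le> (real (cnt e) - real n * (w/2))^2 / ?d" using dpos by simp
    then show "Pw w e \<le> Pw w e * (real (cnt e) - real n * (w/2))^2 / ?d"
      using Pw_nonneg[OF assms(1,2), of e] by (metis mult_le_cancel_left1 not_le times_divide_eq_right)
  qed
  also have "\<dots> \<le> (\<Sum>e\<in>words n. Pw w e * (real (cnt e) - real n * (w/2))^2 / ?d)"
    by (rule sum_mono2[OF finite_words]) (auto intro!: divide_nonneg_pos mult_nonneg_nonneg Pw_nonneg assms dpos)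
  also have "\<dots> = real n * (w/2) * (1 - w/2) / ?d"
    by (simp only: sum_divide_distrib[symmetric] var_eq)
  also have "\<dots> \<le> (real n / 4) / ?d"
  proof (rule divide_right_mono)
    have "(w/2) * (1 - w/2) \<le> 1/4" proof -
      have "0 \<le> (w - 1) * (w - 1)" by simp
      then show ?thesis by (simp add: algebra_simps)
    qed
    then show "real n * (w/2) * (1 - w/2) \<le> real n / 4"
      using mult_left_mono[of "(w/2) * (1 - w/2)" "1/4" "real n"] by simp
  qed (use dpos in simp)
  also have "\<dots> = 1 / (4 * real n * \<epsilon>^2)" using assms by (simp add: power2_eq_square field_simps)
  finally show ?thesis .
qed

definition rr :: "real \<Rightarrow> nat list \<Rightarrow> nat \<Rightarrow> real" where
  "rr s e k = 4 ^ k * (s - edge_start (take k e))"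

lemma start_take:
  assumes "k < length e"
  shows "edge_start (take (Suc k) e) = edge_start (take k e) + quarter (e!k) / 4 ^ Suc k"
proof -
  have l1: "length (take (Suc k) e) = Suc k" and l2: "length (take k e) = k" using assms by auto
  have "edge_start (take (Suc k) e) = (\<Sum>j<Suc k. quarter (take (Suc k) e ! j) / 4 ^ Suc j)"
    unfolding edge_start_def l1 ..
  also have "\<dots> = (\<Sum>j<k. quarter (take (Suc k) e ! j) / 4 ^ Suc j) + quarter (e!k) / 4 ^ Suc k"
    by (simp add: nth_take)
  also have "(\<Sum>j<k. quarter (take (Suc k) e ! j) / 4 ^ Suc j) = (\<Sum>j<k. quarter (take k e ! j) / 4 ^ Suc j)"
    by (rule sum.cong) (auto simp: nth_take)
  also have "\<dots> = edge_start (take k e)" unfolding edge_start_def l2 ..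
  finally show ?thesis .
qed

lemma quarter_cases: "quarter i = 0 \<or> quarter i = 1 \<or> quarter i = 2 \<or> quarter i = 3"
  by (simp add: quarter_def)

lemma rr_rec: "k < length e \<Longrightarrow> rr s e (Suc k) = 4 * rr s e k - quarter (e!k)"
  unfolding rr_def by (simp add: start_take algebra_simps)

lemma rr_bounds:
  assumes "length e = n" "0 < rr s e n" "rr s e n < 1" "k \<le> n"
  shows "0 < rr s e k \<and> rr s e k < 1"
proof -
  have "\<forall>k. k \<le> n \<longrightarrow> n - k = j \<longrightarrow> 0 < rr s e k \<and> rr s e k < 1" for j
  proof (induction j)
    case 0 then show ?case using assms by auto
  next
    case (Suc j)
    show ?case
    proof (intro allI impI)
      fix k assume k: "k \<le> n" "n - k = Suc j"
      then have "Suc k \<le> n" "n - Suc k = j" by auto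
      with Suc have h: "0 < rr s e (Suc k) \<and> rr s e (Suc k) < 1" by blast
      have "k < length e" using k assms by auto
      then have "rr s e k = (quarter (e!k) + rr s e (Suc k)) / 4" using rr_rec[of k e s] by simp
      then show "0 < rr s e k \<and> rr s e k < 1" using h quarter_cases[of "e!k"] by auto
    qed
  qed
  then show ?thesis using assms(4) by blast
qed

lemma floor_quarter: "0 < r \<Longrightarrow> r < 1 \<Longrightarrow> of_int \<lfloor>quarter i + r\<rfloor> = quarter i"
  using quarter_cases[of i] by (auto simp: floor_eq_iff)

lemma loc_rr:
  assumes "length e = n" "0 < rr s e n" "rr s e n < 1" "k \<le> n"
  shows "loc s k = rr s e k"
  using assms(4)
proof (induction k)
  case 0 then show ?case by (simp add: rr_def edge_start_def)
next
  case (Suc k)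
  then have IH: "loc s k = rr s e k" and kl: "k < length e" using assms by auto
  have b: "0 < rr s e (Suc k) \<and> rr s e (Suc k) < 1" using rr_bounds[OF assms(1-3) Suc.prems] .
  have eq: "4 * rr s e k = quarter (e!k) + rr s e (Suc k)" using rr_rec[OF kl, of s] by simp
  show ?case using IH eq floor_quarter[of "rr s e (Suc k)" "e!k"] b by simp
qed

lemma mid_loc:
  assumes "length e = n" "0 < rr s e n" "rr s e n < 1" "k < n"
  shows "mid (loc s k) \<longleftrightarrow> quarter (e!k) = 1 \<or> quarter (e!k) = 2"
proof -
  have b: "0 < rr s e (Suc k) \<and> rr s e (Suc k) < 1" using rr_bounds[OF assms(1-3)] assms(4) by simp
  have "loc s k = (quarter (e!k) + rr s e (Suc k)) / 4"
    using loc_rr[OF assms(1-3), of k] rr_rec[of k e s] assms by simp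
  then show ?thesis using b quarter_cases[of "e!k"] by (auto simp: mid_def)
qed

lemma loc_step:
  assumes "length e = n" "0 < rr s e n" "rr s e n < 1" "k < n"
  shows "quarter (e!k) = 4 * loc s k - loc s (Suc k)"
  using loc_rr[OF assms(1-3), of k] loc_rr[OF assms(1-3), of "Suc k"] rr_rec[of k e s] assms by simp

lemma digit_det:
  assumes "i < 6" "j < 6" "quarter i = quarter j" "quarter i = 1 \<or> quarter i = 2 \<longrightarrow> (upper i \<longleftrightarrow> upper j)"
  shows "i = j"
proof -
  have "i = 0 \<or> i = 1 \<or> i = 2 \<or> i = 3 \<or> i = 4 \<or> i = 5" "j = 0 \<or> j = 1 \<or> j = 2 \<or> j = 3 \<or> j = 4 \<or> j = 5"
    using assms(1,2) by auto
  then show ?thesis using assms(3,4)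
    by (elim disjE) (simp_all add: quarter_def upper_def)
qed

definition cyl :: "nat \<Rightarrow> nat list \<Rightarrow> (real \<times> (nat \<Rightarrow> bool)) set" where
  "cyl n e = edge_cyl n e {0<..<1}"

lemma cyl_mem:
  assumes "(s, b) \<in> cyl n e" "edge_word n e"
  shows "0 < rr s e n" "rr s e n < 1" "\<And>k. k < n \<Longrightarrow> mid (loc s k) \<Longrightarrow> (b k \<longleftrightarrow> upper (e!k))"
  using assms by (auto simp: cyl_def edge_cyl_def rr_def edge_word_def Let_def)

lemma cyl_disj:
  assumes "edge_word n e" "edge_word n e'" "x \<in> cyl n e" "x \<in> cyl n e'"
  shows "e = e'"
proof -
  obtain s b where x: "x = (s, b)" by (cases x)
  note A = cyl_mem[OF assms(3)[unfolded x] assms(1)]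
  note B = cyl_mem[OF assms(4)[unfolded x] assms(2)]
  have le: "length e = n" "length e' = n" "set e \<subseteq> {..<6}" "set e' \<subseteq> {..<6}"
    using assms(1,2) by (auto simp: edge_word_def)
  show ?thesis
  proof (rule nth_equalityI)
    show "length e = length e'" using le by simp
  next
    fix k assume "k < length e"
    then have k: "k < n" using le by simp
    have q: "quarter (e!k) = quarter (e'!k)"
      using loc_step[OF le(1) A(1,2) k] loc_step[OF le(2) B(1,2) k] by simp
    have u: "quarter (e!k) = 1 \<or> quarter (e!k) = 2 \<longrightarrow> (upper (e!k) \<longleftrightarrow> upper (e'!k))"
    proof
      assume "quarter (e!k) = 1 \<or> quarter (e!k) = 2"
      then have "mid (loc s k)" using mid_loc[OF le(1) A(1,2) k] by simp
      then show "upper (e!k) \<longleftrightarrow> upper (e'!k)" using A(3)[OF k] B(3)[OF k] by simp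
    qed
    have "e!k \<in> set e" "e'!k \<in> set e'" using le k by (auto intro!: nth_mem)
    then have "e!k < 6" "e'!k < 6" using le(3,4) by auto
    then show "e!k = e'!k" using digit_det q u by blast
  qed
qed

lemma gen_sub: "{edge_cyl n e B | n e B. edge_word n e \<and> B \<in> sets borel} \<subseteq> Pow diamond_X"
  by (auto simp: edge_cyl_def)

lemma mu_space: "is_mu w \<mu> \<Longrightarrow> space \<mu> = diamond_X"
  unfolding is_mu_def using sets_eq_imp_space_eq[of \<mu> diamond_space]
  by (simp add: diamond_space_def space_measure_of[OF gen_sub])

lemma cyl_sets: "is_mu w \<mu> \<Longrightarrow> edge_word n e \<Longrightarrow> cyl n e \<in> sets \<mu>"
proof -
  assume a: "is_mu w \<mu>" "edge_word n e"
  have "{0<..<1::real} \<in> sets borel" by simp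
  then have "cyl n e \<in> {edge_cyl n e B | n e B. edge_word n e \<and> B \<in> sets borel}"
    unfolding cyl_def using a(2) by blast
  then have "cyl n e \<in> sets diamond_space"
    unfolding diamond_space_def by (rule in_measure_of[OF gen_sub])
  then show ?thesis using a(1) by (simp add: is_mu_def)
qed

lemma cyl_measure: "is_mu w \<mu> \<Longrightarrow> edge_word n e \<Longrightarrow> measure \<mu> (cyl n e) = Pw w e"
proof -
  assume m: "is_mu w \<mu>" and e: "edge_word n e"
  have "{0<..<1::real} \<inter> {0..1} = {0<..<1}" by auto
  then have "measure lborel ({0<..<1::real} \<inter> {0..1}) = 1" by simp
  then show ?thesis using m e unfolding is_mu_def cyl_def Pw_def edge_word_def by auto
qed

definition Good :: "real \<Rightarrow> real \<Rightarrow> nat \<Rightarrow> (real \<times> (nat \<Rightarrow> bool)) set" where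
  "Good w \<epsilon> n = (\<Union>e\<in>{e\<in>words n. \<bar>real (cnt e) - real n*(w/2)\<bar> \<le> real n*\<epsilon>}. cyl n e)"

definition Bad :: "real \<Rightarrow> real \<Rightarrow> nat \<Rightarrow> (real \<times> (nat \<Rightarrow> bool)) set" where
  "Bad w \<epsilon> m = diamond_X - Good w \<epsilon> ((Suc m)^2)"

lemma Good_sets: "is_mu w' \<mu> \<Longrightarrow> Good w \<epsilon> n \<in> sets \<mu>"
proof -
  assume a: "is_mu w' \<mu>"
  have f: "finite {e\<in>words n. \<bar>real (cnt e) - real n*(w/2)\<bar> \<le> real n*\<epsilon>}" using finite_words[of n] by simp
  show ?thesis unfolding Good_def
    by (rule sets.finite_UN[OF f]) (auto simp: words_def intro: cyl_sets[OF a])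
qed

lemma Bad_sets: "is_mu w' \<mu> \<Longrightarrow> Bad w \<epsilon> m \<in> sets \<mu>"
proof -
  assume a: "is_mu w' \<mu>"
  have "diamond_X \<in> sets \<mu>" using sets.top[of \<mu>] mu_space[OF a] by simp
  then show ?thesis unfolding Bad_def using Good_sets[OF a] by (rule sets.Diff)
qed

lemma measure_Good:
  assumes "is_mu w \<mu>"
  shows "measure \<mu> (Good w \<epsilon> n) = (\<Sum>e\<in>{e\<in>words n. \<bar>real (cnt e) - real n*(w/2)\<bar> \<le> real n*\<epsilon>}. Pw w e)"
proof -
  interpret prob_space \<mu> using assms by (simp add: is_mu_def)
  let ?G = "{e\<in>words n. \<bar>real (cnt e) - real n*(w/2)\<bar> \<le> real n*\<epsilon>}"
  have "measure \<mu> (Good w \<epsilon> n) = (\<Sum>e\<in>?G. measure \<mu> (cyl n e))"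
    unfolding Good_def
  proof (rule finite_measure_finite_Union)
    show "finite ?G" using finite_words by simp
    show "cyl n ` ?G \<subseteq> sets \<mu>" using assms by (auto simp: words_def intro: cyl_sets)
    show "disjoint_family_on (cyl n) ?G"
      unfolding disjoint_family_on_def using cyl_disj by (auto simp: words_def)
  qed
  also have "\<dots> = (\<Sum>e\<in>?G. Pw w e)"
    by (rule sum.cong) (auto simp: words_def cyl_measure[OF assms])
  finally show ?thesis .
qed

lemma measure_notGood:
  assumes "is_mu w \<mu>" "0 < w" "w < 1" "\<epsilon> > 0" "n > 0"
  shows "measure \<mu> (diamond_X - Good w \<epsilon> n) \<le> 1 / (4 * real n * \<epsilon>^2)"
proof -
  interpret prob_space \<mu> using assms by (simp add: is_mu_def)
  let ?G = "{e\<in>words n. \<bar>real (cnt e) - real n*(w/2)\<bar> \<le> real n*\<epsilon>}"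
  let ?B = "{e\<in>words n. \<not> \<bar>real (cnt e) - real n*(w/2)\<bar> \<le> real n*\<epsilon>}"
  have wu: "words n = ?G \<union> ?B" by auto
  have fG: "finite ?G" and fB: "finite ?B" using finite_words[of n] by auto
  have "(\<Sum>e\<in>?G \<union> ?B. Pw w e) = (\<Sum>e\<in>?G. Pw w e) + (\<Sum>e\<in>?B. Pw w e)"
    by (rule sum.union_disjoint[OF fG fB]) auto
  then have s1: "1 = (\<Sum>e\<in>?G. Pw w e) + (\<Sum>e\<in>?B. Pw w e)"
    using M0[of w n] wu by simp
  have "measure \<mu> (space \<mu> - Good w \<epsilon> n) = 1 - measure \<mu> (Good w \<epsilon> n)"
    by (rule prob_compl[OF Good_sets[OF assms(1)]])
  then have s2: "measure \<mu> (diamond_X - Good w \<epsilon> n) = 1 - (\<Sum>e\<in>?G. Pw w e)"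
    unfolding measure_Good[OF assms(1)] mu_space[OF assms(1)] .
  have s3: "(\<Sum>e\<in>?B. Pw w e) \<le> 1 / (4 * real n * \<epsilon>^2)"
    by (rule cheb) (use assms in auto)
  from s1 s2 s3 show ?thesis by linarith
qed

lemma measure_Bad:
  assumes "is_mu w \<mu>" "0 < w" "w < 1" "\<epsilon> > 0"
  shows "measure \<mu> (Bad w \<epsilon> m) \<le> 1 / (4 * real ((Suc m)^2) * \<epsilon>^2)"
proof -
  have "(0::nat) < (Suc m)^2" by (rule zero_less_power) (rule zero_less_Suc)
  from measure_notGood[OF assms this] show ?thesis unfolding Bad_def .
qed

lemma aux_inv: "(x::real) > 0 \<Longrightarrow> 1 / (4 * x * e^2) = 1 / (4 * e^2) * inverse x"
  by (simp add: inverse_eq_divide)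

lemma Bad_null:
  assumes "is_mu w \<mu>" "0 < w" "w < 1" "\<epsilon> > 0"
  shows "limsup (Bad w \<epsilon>) \<in> null_sets \<mu>"
proof -
  interpret prob_space \<mu> using assms by (simp add: is_mu_def)
  let ?g = "\<lambda>m. 1 / (4 * \<epsilon>^2) * inverse (real (Suc m) ^ 2)"
  have s0: "summable (\<lambda>m. inverse (real m ^ 2))" by (rule inverse_power_summable) simp
  have s1: "summable (\<lambda>m. inverse (real (Suc m) ^ 2))"
    by (rule summable_Suc_iff[THEN iffD2, OF s0])
  have sg: "summable ?g" by (rule summable_mult[OF s1])
  show ?thesis
  proof (rule borel_cantelli_limsup1)
    show "\<And>n. Bad w \<epsilon> n \<in> sets \<mu>" using Bad_sets[OF assms(1)] .
    show "\<And>n. emeasure \<mu> (Bad w \<epsilon> n) < \<infinity>" by (simp add: less_top[symmetric])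
    show "summable (\<lambda>n. measure \<mu> (Bad w \<epsilon> n))"
    proof (rule summable_comparison_test[OF _ sg])
      show "\<exists>N. \<forall>n\<ge>N. norm (measure \<mu> (Bad w \<epsilon> n)) \<le> ?g n"
      proof (intro exI allI impI)
        fix n :: nat
        have p: "real (Suc n) ^ 2 > 0" by simp
        have eq: "1 / (4 * real ((Suc n)^2) * \<epsilon>^2) = ?g n"
          unfolding of_nat_power by (rule aux_inv[OF p])
        have "measure \<mu> (Bad w \<epsilon> n) \<le> ?g n" using measure_Bad[OF assms, of n] unfolding eq .
        then show "norm (measure \<mu> (Bad w \<epsilon> n)) \<le> ?g n" by simp
      qed
    qed
  qed
qed

lemma not_limsup: "x \<notin> limsup A \<Longrightarrow> \<exists>N. \<forall>m\<ge>N. x \<notin> A m"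
  by (auto simp: limsup_INF_SUP)

lemma Good_disj:
  assumes "x \<in> Good w \<epsilon> n" "x \<in> Good w' \<epsilon> n" "n > 0" "\<epsilon> > 0" "8 * \<epsilon> \<le> \<bar>w - w'\<bar>"
  shows False
proof -
  obtain e where e: "e \<in> words n" "\<bar>real (cnt e) - real n*(w/2)\<bar> \<le> real n*\<epsilon>" "x \<in> cyl n e"
    using assms(1) unfolding Good_def by blast
  obtain e' where e': "e' \<in> words n" "\<bar>real (cnt e') - real n*(w'/2)\<bar> \<le> real n*\<epsilon>" "x \<in> cyl n e'"
    using assms(2) unfolding Good_def by blast
  have "e = e'" using cyl_disj e e' by (auto simp: words_def)
  then have h1: "\<bar>real n*(w/2) - real n*(w'/2)\<bar> \<le> 2 * (real n * \<epsilon>)"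
    using e(2) e'(2) unfolding abs_le_iff by auto
  have eq: "real n*(w/2) - real n*(w'/2) = real n * ((w - w') / 2)" by (simp add: algebra_simps)
  have "\<bar>real n*(w/2) - real n*(w'/2)\<bar> = \<bar>real n * ((w - w') / 2)\<bar>" by (rule arg_cong[OF eq])
  also have "\<dots> = real n * (\<bar>w - w'\<bar> / 2)" by (simp add: abs_mult)
  finally have "\<bar>real n*(w/2) - real n*(w'/2)\<bar> = real n * (\<bar>w - w'\<bar> / 2)" .
  then have "real n * \<bar>w - w'\<bar> \<le> real n * (4 * \<epsilon>)" using h1 by linarith
  then have "\<bar>w - w'\<bar> \<le> 4 * \<epsilon>" using assms(3) by simp
  then show False using assms(4,5) by linarith
qed

theorem lemma2p2:
  fixes w w' :: real and \<mu> \<mu>' :: "(real \<times> (nat \<Rightarrow> bool)) measure"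
  assumes "0 < w" "w < 1" "0 < w'" "w' < 1" "w \<noteq> w'"
    and "is_mu w \<mu>" and "is_mu w' \<mu>'"
  shows "mutually_singular \<mu> \<mu>'"
proof -
  define \<epsilon> where "\<epsilon> = \<bar>w - w'\<bar> / 8"
  have ep: "\<epsilon> > 0" "8 * \<epsilon> \<le> \<bar>w - w'\<bar>" using assms(5) by (auto simp: \<epsilon>_def)
  let ?A = "limsup (Bad w \<epsilon>)"
  let ?A' = "limsup (Bad w' \<epsilon>)"
  have nA: "?A \<in> null_sets \<mu>" by (rule Bad_null[OF assms(6,1,2) ep(1)])
  have nA': "?A' \<in> null_sets \<mu>'" by (rule Bad_null[OF assms(7,3,4) ep(1)])
  have sets_eq: "sets \<mu>' = sets \<mu>" using assms(6,7) by (simp add: is_mu_def)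
  have Aset: "?A \<in> sets \<mu>" using nA by auto
  then have Aset': "?A \<in> sets \<mu>'" using sets_eq by simp
  have sub: "space \<mu>' - ?A \<subseteq> ?A'"
  proof
    fix x assume x: "x \<in> space \<mu>' - ?A"
    then have xX: "x \<in> diamond_X" using mu_space[OF assms(7)] by simp
    show "x \<in> ?A'"
    proof (rule ccontr)
      assume "x \<notin> ?A'"
      then obtain N' where N': "\<forall>m\<ge>N'. x \<notin> Bad w' \<epsilon> m" by (rule not_limsup[THEN exE])
      have "x \<notin> ?A" using x by simp
      then obtain N where N: "\<forall>m\<ge>N. x \<notin> Bad w \<epsilon> m" by (rule not_limsup[THEN exE])
      let ?m = "max N N'"
      have "x \<notin> Bad w \<epsilon> ?m" using N by simp
      then have g1: "x \<in> Good w \<epsilon> ((Suc ?m)^2)" using xX unfolding Bad_def by blast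
      have "x \<notin> Bad w' \<epsilon> ?m" using N' by simp
      then have g2: "x \<in> Good w' \<epsilon> ((Suc ?m)^2)" using xX unfolding Bad_def by blast
      have "(0::nat) < (Suc ?m)^2" by (rule zero_less_power) (rule zero_less_Suc)
      then show False using Good_disj[OF g1 g2 _ ep] by blast
    qed
  qed
  have "space \<mu>' - ?A \<in> sets \<mu>'" using Aset' by auto
  then have "space \<mu>' - ?A \<in> null_sets \<mu>'" using null_sets_subset[OF nA' _ sub] by blast
  then have "emeasure \<mu>' (space \<mu>' - ?A) = 0" by auto
  moreover have "emeasure \<mu> ?A = 0" using nA by auto
  ultimately show ?thesis unfolding mutually_singular_def using Aset Aset' by blast
qed

end
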